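(* Let $A\in\mathbb{R}^{n\times n}$ be symmetric positive definite, $b\in\mathbb{R}^n$, and let the $CD$ method (described in the context) be applied to $Ay=b$ with starting point $y_0\in\mathbb{R}^n$ and real parameters $\gamma_k\neq 0$ for all $k\ge 0$. Let $k\ge 2$ be such that $p_k$ is generated by the method. Then for $0\le i\le k$, $$(Ap_k)^T(Ap_i)=\begin{cases}\|Ap_k\|^2, & i=k,\\[2pt] \dfrac{1}{\gamma_{k-1}}\,p_k^TAp_k, & i=k-1,\\[2pt] 0, & i\le k-2.\end{cases}$$
   Context: The $CD$ method for solving $Ay=b$, with $A$ symmetric positive definite, starting point $y_0\in\mathbb{R}^n$ and nonzero real parameters $\gamma_0,\gamma_1,\dots$, is the following iteration (all norms Euclidean). Set $r_0=b-Ay_0$; if $r_0=0$ stop; set $p_0=r_0$. For $k=0,1,2,\dots$: compute $a_k=\dfrac{r_k^Tp_k}{p_k^TAp_k}$, $y_{k+1}=y_k+a_kp_k$, $r_{k+1}=r_k-a_kAp_k$; if $r_{k+1}=0$ stop; otherwise set $\sigma_k=\gamma_k\dfrac{\|Ap_k\|^2}{p_k^TAp_k}$ and, if $k=0$, $p_1=\gamma_0Ap_0-\sigma_0p_0$, while if $k\ge1$, $\omega_k=\gamma_k\dfrac{(Ap_k)^T(Ap_{k-1})}{p_{k-1}^TAp_{k-1}}$ and $p_{k+1}=\gamma_kAp_k-\sigma_kp_k-\omega_kp_{k-1}$. *)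

theory Defs
  imports "HOL-Analysis.Analysis"
begin

definition spd :: "real^'n^'n \<Rightarrow> bool" where
  "spd A \<longleftrightarrow> transpose A = A \<and> (\<forall>x. x \<noteq> 0 \<longrightarrow> x \<bullet> (A *v x) > 0)"

text \<open>State of the CD iteration after step k: (y_k, r_k, p_k, p_{k-1}).
  For k = 0 the last component is a dummy (0) and is never used.
  Termination (r = 0) is not built in; it is expressed by the hypothesis
  that all residuals r_0, ..., r_k are nonzero (p_k is then generated).\<close>
fun cd_state :: "real^'n^'n \<Rightarrow> real^'n \<Rightarrow> real^'n \<Rightarrow> (nat \<Rightarrow> real) \<Rightarrow> nat
      \<Rightarrow> (real^'n) \<times> (real^'n) \<times> (real^'n) \<times> (real^'n)" where
  "cd_state A b y0 \<gamma> 0 = (y0, b - A *v y0, b - A *v y0, 0)"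
| "cd_state A b y0 \<gamma> (Suc k) =
     (let (y, r, p, pp) = cd_state A b y0 \<gamma> k;
          a = (r \<bullet> p) / (p \<bullet> (A *v p));
          y' = y + a *\<^sub>R p;
          r' = r - a *\<^sub>R (A *v p);
          \<sigma> = \<gamma> k * (norm (A *v p))\<^sup>2 / (p \<bullet> (A *v p));
          p' = (if k = 0 then \<gamma> 0 *\<^sub>R (A *v p) - \<sigma> *\<^sub>R p
                else (let \<omega> = \<gamma> k * ((A *v p) \<bullet> (A *v pp)) / (pp \<bullet> (A *v pp))
                      in \<gamma> k *\<^sub>R (A *v p) - \<sigma> *\<^sub>R p - \<omega> *\<^sub>R pp))
      in (y', r', p', p))"

definition cd_y where "cd_y A b y0 \<gamma> k = fst (cd_state A b y0 \<gamma> k)"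
definition cd_r where "cd_r A b y0 \<gamma> k = fst (snd (cd_state A b y0 \<gamma> k))"
definition cd_p where "cd_p A b y0 \<gamma> k = fst (snd (snd (cd_state A b y0 \<gamma> k)))"

definition cd_generated where
  "cd_generated A b y0 \<gamma> k \<longleftrightarrow> (\<forall>j\<le>k. cd_r A b y0 \<gamma> j \<noteq> 0)"

end

theory Submission
  imports Defs
begin

lemma cd_state_Suc_simps:
  "cd_p A b y0 \<gamma> (Suc k) =
     (let p = cd_p A b y0 \<gamma> k; pp = snd (snd (snd (cd_state A b y0 \<gamma> k)));
          \<sigma> = \<gamma> k * (norm (A *v p))\<^sup>2 / (p \<bullet> (A *v p))
      in if k = 0 then \<gamma> 0 *\<^sub>R (A *v p) - \<sigma> *\<^sub>R p
         else \<gamma> k *\<^sub>R (A *v p) - \<sigma> *\<^sub>R p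
           - (\<gamma> k * ((A *v p) \<bullet> (A *v pp)) / (pp \<bullet> (A *v pp))) *\<^sub>R pp)"
  "snd (snd (snd (cd_state A b y0 \<gamma> (Suc k)))) = cd_p A b y0 \<gamma> k"
  "cd_r A b y0 \<gamma> (Suc k) = cd_r A b y0 \<gamma> k -
     ((cd_r A b y0 \<gamma> k \<bullet> cd_p A b y0 \<gamma> k) / (cd_p A b y0 \<gamma> k \<bullet> (A *v cd_p A b y0 \<gamma> k)))
       *\<^sub>R (A *v cd_p A b y0 \<gamma> k)"
  by (simp_all add: cd_p_def cd_r_def Let_def case_prod_unfold)

lemma cd_p0: "cd_p A b y0 \<gamma> 0 = cd_r A b y0 \<gamma> 0"
  by (simp add: cd_p_def cd_r_def)

lemma cd_p_Suc0: "cd_p A b y0 \<gamma> (Suc 0) =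
   \<gamma> 0 *\<^sub>R (A *v cd_p A b y0 \<gamma> 0) - (\<gamma> 0 * (norm (A *v cd_p A b y0 \<gamma> 0))\<^sup>2 /
      (cd_p A b y0 \<gamma> 0 \<bullet> (A *v cd_p A b y0 \<gamma> 0))) *\<^sub>R cd_p A b y0 \<gamma> 0"
  apply (subst cd_state_Suc_simps(1))
  apply (simp only: Let_def)
  apply simp
  done

lemma cd_p_SucSuc: "cd_p A b y0 \<gamma> (Suc (Suc k)) =
   \<gamma> (Suc k) *\<^sub>R (A *v cd_p A b y0 \<gamma> (Suc k))
   - (\<gamma> (Suc k) * (norm (A *v cd_p A b y0 \<gamma> (Suc k)))\<^sup>2 /
      (cd_p A b y0 \<gamma> (Suc k) \<bullet> (A *v cd_p A b y0 \<gamma> (Suc k)))) *\<^sub>R cd_p A b y0 \<gamma> (Suc k)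
   - (\<gamma> (Suc k) * ((A *v cd_p A b y0 \<gamma> (Suc k)) \<bullet> (A *v cd_p A b y0 \<gamma> k)) /
      (cd_p A b y0 \<gamma> k \<bullet> (A *v cd_p A b y0 \<gamma> k))) *\<^sub>R cd_p A b y0 \<gamma> k"
  apply (subst cd_state_Suc_simps(1))
  apply (simp only: cd_state_Suc_simps(2) Let_def)
  apply simp
  done

lemma orth_span: "v \<in> span S \<Longrightarrow> (\<And>s. s \<in> S \<Longrightarrow> a \<bullet> s = 0) \<Longrightarrow> a \<bullet> v = 0"
  by (induct rule: span_induct_alt) (auto simp: inner_add_right)

context
  fixes A :: "real^'n^'n" and b y0 :: "real^'n" and \<gamma> :: "nat \<Rightarrow> real"
  assumes spd: "spd A" and gam: "\<forall>j. \<gamma> j \<noteq> 0"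
begin

abbreviation "P \<equiv> cd_p A b y0 \<gamma>"
abbreviation "R \<equiv> cd_r A b y0 \<gamma>"

lemma symA: "x \<bullet> (A *v y) = (A *v x) \<bullet> y"
proof -
  have "transpose A = A" using spd by (simp add: spd_def)
  then show ?thesis by (metis dot_lmul_matrix vector_transpose_matrix)
qed

lemma posA: "x \<noteq> 0 \<Longrightarrow> x \<bullet> (A *v x) > 0"
  using spd by (simp add: spd_def)

lemma Arec: "\<exists>c d. \<gamma> j *\<^sub>R (A *v P j) = P (Suc j) + c *\<^sub>R P j + d *\<^sub>R P (j - 1)"
proof (cases j)
  case 0
  show ?thesis unfolding 0 cd_p_Suc0
    by (rule exI[of _ "\<gamma> 0 * (norm (A *v P 0))\<^sup>2 / (P 0 \<bullet> (A *v P 0))"], rule exI[of _ 0]) simp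
next
  case (Suc k)
  show ?thesis unfolding Suc cd_p_SucSuc
    by (rule exI[of _ "\<gamma> (Suc k) * (norm (A *v P (Suc k)))\<^sup>2 / (P (Suc k) \<bullet> (A *v P (Suc k)))"],
        rule exI[of _ "\<gamma> (Suc k) * ((A *v P (Suc k)) \<bullet> (A *v P k)) / (P k \<bullet> (A *v P k))"]) simp
qed

lemma Aspan: "A *v P j \<in> span (P ` {..Suc j})"
proof -
  obtain c d where e: "\<gamma> j *\<^sub>R (A *v P j) = P (Suc j) + c *\<^sub>R P j + d *\<^sub>R P (j - 1)"
    using Arec by blast
  have "A *v P j = (1 / \<gamma> j) *\<^sub>R (P (Suc j) + c *\<^sub>R P j + d *\<^sub>R P (j - 1))"
    using gam e[symmetric] by simp
  also have "\<dots> \<in> span (P ` {..Suc j})"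
    by (intro span_mul span_add span_base) auto
  finally show ?thesis .
qed

lemma inv: "(\<forall>j\<le>m. R j \<noteq> 0) \<Longrightarrow> (\<forall>j\<le>m. P j \<noteq> 0) \<and>
   (\<forall>i\<le>m. \<forall>j\<le>m. i \<noteq> j \<longrightarrow> P i \<bullet> (A *v P j) = 0) \<and>
   (\<forall>j<m. R m \<bullet> P j = 0) \<and> R m \<in> span (P ` {..m})"
proof (induction m)
  case 0
  then show ?case by (simp add: cd_p0 span_base)
next
  case (Suc m)
  from Suc.prems have "\<forall>j\<le>m. R j \<noteq> 0" by simp
  with Suc.IH have nz: "\<forall>j\<le>m. P j \<noteq> 0"
    and cj: "\<forall>i\<le>m. \<forall>j\<le>m. i \<noteq> j \<longrightarrow> P i \<bullet> (A *v P j) = 0"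
    and ro: "\<forall>j<m. R m \<bullet> P j = 0" and rs: "R m \<in> span (P ` {..m})" by auto
  have cj': "(A *v P i) \<bullet> P j = 0" if "i \<le> m" "j \<le> m" "i \<noteq> j" for i j
    using cj that by (metis symA)
  have pos: "P j \<bullet> (A *v P j) \<noteq> 0" if "j \<le> m" for j
    using posA nz that by (metis less_irrefl)
  have new: "P (Suc m) \<bullet> (A *v P j) = 0" if jm: "j \<le> m" for j
  proof (cases m)
    case 0
    with jm have j: "j = 0" by simp
    have "(\<gamma> 0 * (norm (A *v P 0))\<^sup>2 / (P 0 \<bullet> (A *v P 0))) * (P 0 \<bullet> (A *v P 0))
        = \<gamma> 0 * ((A *v P 0) \<bullet> (A *v P 0))"
      using pos[of 0] by (simp add: power2_norm_eq_inner)
    then show ?thesis unfolding j \<open>m = 0\<close> cd_p_Suc0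
      by (simp add: inner_diff_left)
  next
    case (Suc m')
    let ?p = "P (Suc m')" and ?pp = "P m'"
    have e: "P (Suc m) \<bullet> (A *v P j) = \<gamma> (Suc m') * ((A *v ?p) \<bullet> (A *v P j))
      - (\<gamma> (Suc m') * (norm (A *v ?p))\<^sup>2 / (?p \<bullet> (A *v ?p))) * (?p \<bullet> (A *v P j))
      - (\<gamma> (Suc m') * ((A *v ?p) \<bullet> (A *v ?pp)) / (?pp \<bullet> (A *v ?pp))) * (?pp \<bullet> (A *v P j))"
      unfolding Suc cd_p_SucSuc by (simp add: inner_diff_left)
    consider "j = Suc m'" | "j = m'" | "j < m'" using jm Suc by linarith
    then show ?thesis
    proof cases
      case 1
      have "?pp \<bullet> (A *v ?p) = 0" using cj Suc by simp
      moreover have "(\<gamma> (Suc m') * (norm (A *v ?p))\<^sup>2 / (?p \<bullet> (A *v ?p))) * (?p \<bullet> (A *v ?p))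
          = \<gamma> (Suc m') * ((A *v ?p) \<bullet> (A *v ?p))"
        using pos[of "Suc m'"] Suc by (simp add: power2_norm_eq_inner)
      ultimately show ?thesis using e 1 by simp
    next
      case 2
      have "?p \<bullet> (A *v ?pp) = 0" using cj Suc by simp
      moreover have "(\<gamma> (Suc m') * ((A *v ?p) \<bullet> (A *v ?pp)) / (?pp \<bullet> (A *v ?pp))) * (?pp \<bullet> (A *v ?pp))
          = \<gamma> (Suc m') * ((A *v ?p) \<bullet> (A *v ?pp))"
        using pos[of m'] Suc by simp
      ultimately show ?thesis using e 2 by simp
    next
      case 3
      have a: "?p \<bullet> (A *v P j) = 0" "?pp \<bullet> (A *v P j) = 0" using cj Suc 3 by auto
      have "(A *v ?p) \<bullet> (A *v P j) = 0"
      proof (rule orth_span[OF Aspan])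
        fix s assume "s \<in> P ` {..Suc j}"
        then obtain i where i: "i \<le> Suc j" "s = P i" by auto
        then show "(A *v ?p) \<bullet> s = 0" using cj' Suc 3 by simp
      qed
      with a e show ?thesis by simp
    qed
  qed
  have cjS: "\<forall>i\<le>Suc m. \<forall>j\<le>Suc m. i \<noteq> j \<longrightarrow> P i \<bullet> (A *v P j) = 0"
  proof (intro allI impI)
    fix i j assume h: "i \<le> Suc m" "j \<le> Suc m" "i \<noteq> j"
    show "P i \<bullet> (A *v P j) = 0"
    proof -
      consider "i = Suc m" "j \<le> m" | "j = Suc m" "i \<le> m" | "i \<le> m" "j \<le> m" using h by linarith
      then show ?thesis
      proof cases
        case 1 then show ?thesis using new by simp
      next
        case 2 then show ?thesis using new[of i] by (metis symA inner_commute)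
      next
        case 3 then show ?thesis using cj h by simp
      qed
    qed
  qed
  have rS: "R (Suc m) = R m - ((R m \<bullet> P m) / (P m \<bullet> (A *v P m))) *\<^sub>R (A *v P m)"
    by (rule cd_state_Suc_simps(3))
  have roS: "\<forall>j<Suc m. R (Suc m) \<bullet> P j = 0"
  proof (intro allI impI)
    fix j assume "j < Suc m"
    then consider "j = m" | "j < m" by linarith
    then show "R (Suc m) \<bullet> P j = 0"
    proof cases
      case 1
      have "(A *v P m) \<bullet> P m = P m \<bullet> (A *v P m)" by (simp add: inner_commute)
      then show ?thesis using 1 rS pos[of m] by (simp add: inner_diff_left)
    next
      case 2
      then show ?thesis using rS ro cj'[of m j] by (simp add: inner_diff_left)
    qed
  qed
  have sub: "span (P ` {..m}) \<subseteq> span (P ` {..Suc m})"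
    by (intro span_mono image_mono) auto
  have rsS: "R (Suc m) \<in> span (P ` {..Suc m})"
    unfolding rS using rs sub Aspan[of m] by (intro span_diff span_mul) auto
  have nzS: "P (Suc m) \<noteq> 0"
  proof
    assume z: "P (Suc m) = 0"
    have "P ` {..Suc m} = insert 0 (P ` {..m})"
      using z by (auto simp: atMost_Suc)
    then have "R (Suc m) \<in> span (P ` {..m})" using rsS by (simp add: span_insert_0)
    then have "R (Suc m) \<bullet> R (Suc m) = 0"
      by (rule orth_span) (use roS in auto)
    then show False using Suc.prems by simp
  qed
  show ?case using nz nzS cjS roS rsS by (auto simp: le_Suc_eq)
qed

end

theorem lemma2:
  fixes A :: "real^'n^'n" and b y0 :: "real^'n" and \<gamma> :: "nat \<Rightarrow> real"
    and k i :: nat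
  assumes "spd A"
    and "\<forall>j. \<gamma> j \<noteq> 0"
    and "k \<ge> 2"
    and "cd_generated A b y0 \<gamma> k"
    and "i \<le> k"
  shows "(A *v cd_p A b y0 \<gamma> k) \<bullet> (A *v cd_p A b y0 \<gamma> i) =
    (if i = k then (norm (A *v cd_p A b y0 \<gamma> k))\<^sup>2
     else if i = k - 1 then (1 / \<gamma> (k - 1)) * (cd_p A b y0 \<gamma> k \<bullet> (A *v cd_p A b y0 \<gamma> k))
     else 0)"
proof -
  note sp = assms(1) and gm = assms(2)
  let ?P = "cd_p A b y0 \<gamma>"
  have cj: "\<forall>i\<le>k. \<forall>j\<le>k. i \<noteq> j \<longrightarrow> ?P i \<bullet> (A *v ?P j) = 0"
    using inv[OF sp gm, where m=k] assms(4) by (simp add: cd_generated_def)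
  have cj': "(A *v ?P k) \<bullet> ?P j = 0" if "j < k" for j
    using cj that symA[OF sp gm, where x="?P k" and y="?P j"] by (metis inner_commute less_irrefl less_imp_le order_refl)
  consider "i = k" | "i = k - 1" | "i < k - 1" using assms(5) by linarith
  then show ?thesis
  proof cases
    case 1 then show ?thesis by (simp add: power2_norm_eq_inner)
  next
    case 2
    obtain c d where e: "\<gamma> (k - 1) *\<^sub>R (A *v ?P (k - 1)) =
        ?P (Suc (k - 1)) + c *\<^sub>R ?P (k - 1) + d *\<^sub>R ?P (k - 1 - 1)"
      using Arec[OF sp gm] by blast
    have sk: "Suc (k - 1) = k" using assms(3) by simp
    have "\<gamma> (k - 1) * ((A *v ?P k) \<bullet> (A *v ?P (k - 1))) = (A *v ?P k) \<bullet> ?P k"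
      using arg_cong[OF e, of "\<lambda>v. (A *v ?P k) \<bullet> v"] cj'[of "k - 1"] cj'[of "k - 1 - 1"] assms(3)
      by (simp add: sk inner_add_right)
    also have "\<dots> = ?P k \<bullet> (A *v ?P k)" by (simp add: inner_commute)
    finally show ?thesis using 2 assms(3) gm
      by (auto simp: field_simps)
  next
    case 3
    have "(A *v ?P k) \<bullet> (A *v ?P i) = 0"
    proof (rule orth_span[OF Aspan[OF sp gm]])
      fix s assume "s \<in> ?P ` {..Suc i}"
      then obtain j where "j \<le> Suc i" "s = ?P j" by auto
      then show "(A *v ?P k) \<bullet> s = 0" using cj' 3 by simp
    qed
    then show ?thesis using 3 by simp
  qed
qed

end
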